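(* Let $n\ge 6$. For every $n$-vertex graph $G$, $$av_1(G)\le \frac n2+1,$$ with equality if and only if $G=K_2\cup(n-2)K_1$, i.e. $G$ consists of a single edge together with $n-2$ isolated vertices.
   Context: All graphs are finite and simple. For a graph $G=(V,E)$, a set $S\subseteq V$ is a $1$-nearly independent vertex set if the subgraph induced by $S$ has exactly one edge. $\sigma_1(G)$ is the number of such sets, $S_1(G)$ the sum of their sizes, and $av_1(G)=S_1(G)/\sigma_1(G)$, with $av_1(G)=0$ when $G$ has no edges. *)

theory Defs
  imports Complex_Main
begin

definition simple_graph :: "'a set \<Rightarrow> 'a set set \<Rightarrow> bool" where
  "simple_graph V E \<longleftrightarrow> finite V \<and> (\<forall>e\<in>E. e \<subseteq> V \<and> card e = 2)"

definition induced_edges :: "'a set set \<Rightarrow> 'a set \<Rightarrow> 'a set set" where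
  "induced_edges E S = {e \<in> E. e \<subseteq> S}"

definition nearly_indep_sets :: "'a set \<Rightarrow> 'a set set \<Rightarrow> 'a set set" where
  "nearly_indep_sets V E = {S. S \<subseteq> V \<and> card (induced_edges E S) = 1}"

definition sigma1 :: "'a set \<Rightarrow> 'a set set \<Rightarrow> nat" where
  "sigma1 V E = card (nearly_indep_sets V E)"

definition S1 :: "'a set \<Rightarrow> 'a set set \<Rightarrow> nat" where
  "S1 V E = (\<Sum>S\<in>nearly_indep_sets V E. card S)"

definition av1 :: "'a set \<Rightarrow> 'a set set \<Rightarrow> real" where
  "av1 V E = (if E = {} then 0 else real (S1 V E) / real (sigma1 V E))"

end

theory Submission
  imports Defs
begin

lemma sum_card_swap:
  assumes "finite V" "finite F" "\<And>S. S \<in> F \<Longrightarrow> g S \<subseteq> V"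
  shows "(\<Sum>S\<in>F. card (g S)) = (\<Sum>x\<in>V. card {S\<in>F. x \<in> g S})"
proof -
  have "(\<Sum>S\<in>F. card (g S)) = (\<Sum>S\<in>F. \<Sum>x\<in>V. if x \<in> g S then 1 else 0)"
  proof (rule sum.cong)
    fix S assume "S \<in> F"
    then have "g S = {x\<in>V. x \<in> g S}" using assms(3) by auto
    then have "card (g S) = (\<Sum>x\<in>{x\<in>V. x \<in> g S}. 1)" by simp
    also have "\<dots> = (\<Sum>x\<in>V. if x \<in> g S then 1 else 0)"
      by (rule sum.inter_filter[OF assms(1)])
    finally show "card (g S) = (\<Sum>x\<in>V. if x \<in> g S then 1 else 0)" .
  qed simp
  also have "\<dots> = (\<Sum>x\<in>V. \<Sum>S\<in>F. if x \<in> g S then 1 else 0)"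
    by (rule sum.swap)
  also have "\<dots> = (\<Sum>x\<in>V. card {S\<in>F. x \<in> g S})"
  proof (rule sum.cong)
    fix x assume "x \<in> V"
    have "card {S\<in>F. x \<in> g S} = (\<Sum>S\<in>{S\<in>F. x \<in> g S}. 1)" by simp
    also have "\<dots> = (\<Sum>S\<in>F. if x \<in> g S then 1 else 0)"
      by (rule sum.inter_filter[OF assms(2)])
    finally show "(\<Sum>S\<in>F. if x \<in> g S then 1 else 0) = card {S\<in>F. x \<in> g S}" by simp
  qed simp
  finally show ?thesis .
qed

theorem mainTheorem9:
  fixes V :: "'a set" and E :: "'a set set" and n :: nat
  assumes "simple_graph V E" and "card V = n" and "n \<ge> 6"
  shows "av1 V E \<le> real n / 2 + 1
    \<and> (av1 V E = real n / 2 + 1 \<longleftrightarrow> card E = 1)"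
proof -
  define F where "F = nearly_indep_sets V E"
  define U where "U S = \<Union>(induced_edges E S)" for S
  have finV: "finite V" and EV: "\<And>e. e \<in> E \<Longrightarrow> e \<subseteq> V \<and> card e = 2"
    using assms(1) unfolding simple_graph_def by auto
  have finE: "finite E" using EV finV
    by (meson Pow_iff finite_Pow_iff rev_finite_subset subsetI)
  have FV: "S \<in> F \<Longrightarrow> S \<subseteq> V" for S unfolding F_def nearly_indep_sets_def by auto
  have finF: "finite F" using FV finV
    by (meson Pow_iff finite_Pow_iff rev_finite_subset subsetI)
  have one: "\<exists>e. induced_edges E S = {e} \<and> e \<in> E \<and> e \<subseteq> S \<and> card e = 2" if "S \<in> F" for S
  proof -
    have "card (induced_edges E S) = 1" using that unfolding F_def nearly_indep_sets_def by auto
    then obtain e where e: "induced_edges E S = {e}" by (meson card_1_singletonE)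
    then have "e \<in> E" "e \<subseteq> S" unfolding induced_edges_def by auto
    then show ?thesis using e EV by auto
  qed
  have US: "U S \<subseteq> S \<and> card (U S) = 2" if "S \<in> F" for S
    using one[OF that] unfolding U_def by auto
  have UV: "U S \<subseteq> V" if "S \<in> F" for S using US[OF that] FV[OF that] by auto
  have key: "S - {x} \<in> F" if "S \<in> F" "x \<notin> U S" for S x
  proof -
    have "induced_edges E (S - {x}) = induced_edges E S"
      using that(2) unfolding U_def induced_edges_def by auto
    then show ?thesis using that(1) unfolding F_def nearly_indep_sets_def by auto
  qed
  define A where "A x = {S\<in>F. x \<in> S \<and> x \<notin> U S}" for x
  define B where "B x = {S\<in>F. x \<notin> S}" for x
  define C where "C x = {S\<in>F. x \<in> U S}" for x
  have AB: "card (A x) \<le> card (B x)" for x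
  proof (rule card_inj_on_le[where f = "\<lambda>S. S - {x}"])
    show "inj_on (\<lambda>S. S - {x}) (A x)" unfolding A_def inj_on_def by blast
    show "(\<lambda>S. S - {x}) ` A x \<subseteq> B x" unfolding A_def B_def using key by auto
    show "finite (B x)" unfolding B_def using finF by auto
  qed
  have part: "card (A x) + card (B x) + card (C x) = card F" for x
  proof -
    have "F = (A x \<union> B x) \<union> C x" unfolding A_def B_def C_def using US by auto
    moreover have "(A x \<union> B x) \<inter> C x = {}" "A x \<inter> B x = {}"
      unfolding A_def B_def C_def using US by auto
    moreover have "finite (A x)" "finite (B x)" "finite (C x)"
      unfolding A_def B_def C_def using finF by auto
    ultimately show ?thesis by (metis card_Un_disjoint finite_UnI)
  qed
  have cnt: "card {S\<in>F. x \<in> S} = card (A x) + card (C x)" for x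
  proof -
    have "{S\<in>F. x \<in> S} = A x \<union> C x" unfolding A_def C_def using US by auto
    moreover have "A x \<inter> C x = {}" unfolding A_def C_def by auto
    moreover have "finite (A x)" "finite (C x)"
      unfolding A_def C_def using finF by auto
    ultimately show ?thesis by (simp add: card_Un_disjoint)
  qed
  have S1eq: "S1 V E = (\<Sum>x\<in>V. card {S\<in>F. x \<in> S})"
    unfolding S1_def F_def[symmetric]
    using sum_card_swap[OF finV finF, of "\<lambda>S. S"] FV by simp
  have Csum: "(\<Sum>x\<in>V. card (C x)) = 2 * card F"
  proof -
    have "(\<Sum>x\<in>V. card (C x)) = (\<Sum>S\<in>F. card (U S))"
      unfolding C_def using sum_card_swap[OF finV finF, of U] UV by simp
    also have "\<dots> = (\<Sum>S\<in>F. 2)" using US by simp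
    finally show ?thesis by simp
  qed
  have ineq: "2 * card {S\<in>F. x \<in> S} \<le> card F + card (C x)" for x
    using AB[of x] part[of x] cnt[of x] by linarith
  have main: "2 * S1 V E \<le> (n + 2) * card F"
  proof -
    have "2 * S1 V E = (\<Sum>x\<in>V. 2 * card {S\<in>F. x \<in> S})"
      unfolding S1eq by (simp add: sum_distrib_left)
    also have "\<dots> \<le> (\<Sum>x\<in>V. card F + card (C x))" by (rule sum_mono) (rule ineq)
    also have "\<dots> = n * card F + 2 * card F" using Csum assms(2) by (simp add: sum.distrib)
    finally show ?thesis by (simp add: algebra_simps)
  qed
  show ?thesis
  proof (cases "E = {}")
    case True
    then show ?thesis unfolding av1_def by simp
  next
    case False
    then obtain e0 where e0: "e0 \<in> E" by auto
    have "induced_edges E e0 = {e0}"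
    proof -
      have "f = e0" if "f \<in> E" "f \<subseteq> e0" for f
        using EV[OF that(1)] EV[OF e0] that(2) by (metis card.infinite card_subset_eq zero_neq_numeral)
      then show ?thesis unfolding induced_edges_def using e0 by auto
    qed
    then have "e0 \<in> F" unfolding F_def nearly_indep_sets_def using EV[OF e0] by auto
    then have Fpos: "card F > 0" using finF card_gt_0_iff by blast
    have av: "av1 V E = real (S1 V E) / real (card F)"
      unfolding av1_def sigma1_def F_def using False by simp
    have le: "av1 V E \<le> real n / 2 + 1"
    proof -
      have "real (2 * S1 V E) \<le> real ((n + 2) * card F)" using main by linarith
      then show ?thesis unfolding av using Fpos by (simp add: field_simps)
    qed
    have iff: "av1 V E = real n / 2 + 1 \<longleftrightarrow> card E = 1"
    proof
      assume "card E = 1"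
      then obtain e where Ee: "E = {e}" by (meson card_1_singletonE)
      have Fchar: "S \<in> F \<longleftrightarrow> S \<subseteq> V \<and> e \<subseteq> S" for S
      proof -
        have "induced_edges E S = (if e \<subseteq> S then {e} else {})"
          unfolding induced_edges_def Ee by auto
        then show ?thesis unfolding F_def nearly_indep_sets_def by auto
      qed
      have BA: "card (B x) \<le> card (A x)" if "x \<in> V" for x
      proof (rule card_inj_on_le[where f = "\<lambda>S. insert x S"])
        show "inj_on (insert x) (B x)" unfolding B_def inj_on_def by (metis (mono_tags, lifting) mem_Collect_eq insert_ident)
        show "insert x ` B x \<subseteq> A x"
        proof
          fix T assume "T \<in> insert x ` B x"
          then obtain S where S: "S \<in> F" "x \<notin> S" "T = insert x S" unfolding B_def by auto
          have "T \<in> F" using S Fchar that by auto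
          moreover have "x \<notin> U T" using US[OF S(1)] S one[OF S(1)] one[OF \<open>T \<in> F\<close>]
            unfolding U_def Ee by auto
          ultimately show "T \<in> A x" unfolding A_def using S by auto
        qed
        show "finite (A x)" unfolding A_def using finF by auto
      qed
      have eqx: "2 * card {S\<in>F. x \<in> S} = card F + card (C x)" if "x \<in> V" for x
        using AB[of x] BA[OF that] part[of x] cnt[of x] by linarith
      have "2 * S1 V E = (n + 2) * card F"
      proof -
        have "2 * S1 V E = (\<Sum>x\<in>V. 2 * card {S\<in>F. x \<in> S})"
          unfolding S1eq by (simp add: sum_distrib_left)
        also have "\<dots> = (\<Sum>x\<in>V. card F + card (C x))" by (rule sum.cong) (simp_all add: eqx)
        also have "\<dots> = n * card F + 2 * card F" using Csum assms(2) by (simp add: sum.distrib)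
        finally show ?thesis by (simp add: algebra_simps)
      qed
      then have "real (2 * S1 V E) = real ((n + 2) * card F)" by simp
      then show "av1 V E = real n / 2 + 1" unfolding av using Fpos by (simp add: field_simps)
    next
      assume eq: "av1 V E = real n / 2 + 1"
      show "card E = 1"
      proof (rule ccontr)
        assume ne1: "card E \<noteq> 1"
        obtain M where M: "M \<in> F" "\<And>S. S \<in> F \<Longrightarrow> card S \<le> card M"
        proof -
          have "Max (card ` F) \<in> card ` F" using finF \<open>e0 \<in> F\<close> by (intro Max_in) auto
          then obtain M where "M \<in> F" "card M = Max (card ` F)" by auto
          moreover have "\<And>S. S \<in> F \<Longrightarrow> card S \<le> Max (card ` F)" using finF by simp
          ultimately show ?thesis using that by metis
        qed
        have "M \<noteq> V"
        proof
          assume "M = V"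
          then have "induced_edges E M = E" unfolding induced_edges_def using EV by auto
          then show False using M(1) ne1 unfolding F_def nearly_indep_sets_def by auto
        qed
        then obtain x0 where x0: "x0 \<in> V" "x0 \<notin> M" using FV[OF M(1)] by auto
        have strict: "card (A x0) < card (B x0)"
        proof -
          have "card (A x0) \<le> card (B x0 - {M})"
          proof (rule card_inj_on_le[where f = "\<lambda>S. S - {x0}"])
            show "inj_on (\<lambda>S. S - {x0}) (A x0)" unfolding A_def inj_on_def by blast
            show "(\<lambda>S. S - {x0}) ` A x0 \<subseteq> B x0 - {M}"
            proof
              fix T assume "T \<in> (\<lambda>S. S - {x0}) ` A x0"
              then obtain S where S: "S \<in> A x0" "T = S - {x0}" by auto
              have "T \<noteq> M"
              proof
                assume "T = M"
                then have "S = insert x0 M" using S unfolding A_def by auto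
                then have "card S = Suc (card M)"
                  using x0 FV[OF M(1)] finV by (simp add: finite_subset)
                moreover have "card S \<le> card M" using M(2) S unfolding A_def by auto
                ultimately show False by simp
              qed
              then show "T \<in> B x0 - {M}" using S key unfolding A_def B_def by auto
            qed
            show "finite (B x0 - {M})" unfolding B_def using finF by auto
          qed
          moreover have "M \<in> B x0" unfolding B_def using M x0 by auto
          moreover have "finite (B x0)" unfolding B_def using finF by auto
          ultimately show ?thesis by (metis card_Diff1_less order_le_less_trans)
        qed
        have "2 * S1 V E < (n + 2) * card F"
        proof -
          have "2 * S1 V E = (\<Sum>x\<in>V. 2 * card {S\<in>F. x \<in> S})"
            unfolding S1eq by (simp add: sum_distrib_left)
          also have "\<dots> < (\<Sum>x\<in>V. card F + card (C x))"
          proof (rule sum_strict_mono_ex1[OF finV])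
            show "\<forall>x\<in>V. 2 * card {S\<in>F. x \<in> S} \<le> card F + card (C x)" using ineq by auto
            show "\<exists>x\<in>V. 2 * card {S\<in>F. x \<in> S} < card F + card (C x)"
              using x0 strict part[of x0] cnt[of x0] by (intro bexI[of _ x0]) linarith+
          qed
          also have "\<dots> = n * card F + 2 * card F" using Csum assms(2) by (simp add: sum.distrib)
          finally show ?thesis by (simp add: algebra_simps)
        qed
        then have "real (2 * S1 V E) < real ((n + 2) * card F)" by linarith
        then have "av1 V E < real n / 2 + 1" unfolding av using Fpos by (simp add: field_simps)
        then show False using eq by simp
      qed
    qed
    show ?thesis using le iff by simp
  qed
qed

end
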